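(* Let $T$ be a complete theory with monster model $\mathcal{U}$, $A\subseteq\mathcal{U}$ small, $\mu\in\mathfrak{M}_x(\mathcal{U})$, $\nu\in\mathfrak{M}_y(\mathcal{U})$, and suppose $\lambda\in\mathfrak{M}_{xy}(A)$ witnesses $\mu\geq_{\mathbb{E},A}\nu$. If $\lambda$ is smooth over $A$, then both $\mu$ and $\nu$ are smooth over $A$.
   Context: For $C\subseteq\mathcal{U}$, $\mathcal{L}_x(C)$ is the Boolean algebra of formulas in $x$ with parameters from $C$ modulo $T$, embedded in $\mathcal{L}_{xy}(C)$ via $\varphi(x)\mapsto\varphi(x)\wedge y=y$; $\mathfrak{M}_x(C)$ is the set of finitely additive probability measures on $\mathcal{L}_x(C)$. For $\omega\in\mathfrak{M}_{xy}(C)$, $\pi_x(\omega)(\varphi(x))=\omega(\varphi(x)\wedge y=y)$ (similarly $\pi_y$); $\omega|_D$ is restriction. $\lambda$ witnesses $\mu\geq_{\mathbb{E},A}\nu$ means $\pi_x(\lambda)=\mu|_A$ and every $\omega\in\mathfrak{M}_{xy}(\mathcal{U})$ with $\omega|_A=\lambda$ and $\pi_x(\omega)=\mu$ satisfies $\pi_y(\omega)=\nu$. A global measure is smooth over $A$ if it is the unique global measure with its restriction to $A$. A measure $\eta\in\mathfrak{M}_{xy}(A)$ is smooth over $A$ if there is a unique $\omega\in\mathfrak{M}_{xy}(\mathcal{U})$ with $\omega|_A=\eta$. *)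

theory Defs
  imports Complex_Main
begin

datatype 'f trm = Var nat | Fn 'f "'f trm list"

datatype ('f, 'r) fm =
    Eq "'f trm" "'f trm"
  | Rel 'r "'f trm list"
  | Neg "('f, 'r) fm"
  | Conj "('f, 'r) fm" "('f, 'r) fm"
  | Ex nat "('f, 'r) fm"

text \<open>A structure whose universe is the whole type 'u (the monster model).\<close>
record ('f, 'r, 'u) struc =
  funs :: "'f \<Rightarrow> 'u list \<Rightarrow> 'u"
  rels :: "'r \<Rightarrow> 'u list \<Rightarrow> bool"

fun tval :: "('f, 'r, 'u) struc \<Rightarrow> (nat \<Rightarrow> 'u) \<Rightarrow> 'f trm \<Rightarrow> 'u" where
  "tval M e (Var v) = e v"
| "tval M e (Fn f ts) = funs M f (map (tval M e) ts)"

fun sat :: "('f, 'r, 'u) struc \<Rightarrow> ('f, 'r) fm \<Rightarrow> (nat \<Rightarrow> 'u) \<Rightarrow> bool" where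
  "sat M (Eq s t) e = (tval M e s = tval M e t)"
| "sat M (Rel r ts) e = rels M r (map (tval M e) ts)"
| "sat M (Neg p) e = (\<not> sat M p e)"
| "sat M (Conj p q) e = (sat M p e \<and> sat M q e)"
| "sat M (Ex v p) e = (\<exists>a. sat M p (e(v := a)))"

fun tvars :: "'f trm \<Rightarrow> nat set" where
  "tvars (Var v) = {v}"
| "tvars (Fn f ts) = (\<Union>t\<in>set ts. tvars t)"

fun fvars :: "('f, 'r) fm \<Rightarrow> nat set" where
  "fvars (Eq s t) = tvars s \<union> tvars t"
| "fvars (Rel r ts) = (\<Union>t\<in>set ts. tvars t)"
| "fvars (Neg p) = fvars p"
| "fvars (Conj p q) = fvars p \<union> fvars q"
| "fvars (Ex v p) = fvars p - {v}"

section \<open>Definable sets: the algebra L_k(C) of formulas in k variables with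
  parameters from C modulo T = Th(U), represented by the sets they define in U^k
  (tuples are lists of length k)\<close>

definition definable :: "('f, 'r, 'u) struc \<Rightarrow> 'u set \<Rightarrow> nat \<Rightarrow> 'u list set \<Rightarrow> bool" where
  "definable M C k X \<longleftrightarrow>
     (\<exists>(\<phi> :: ('f, 'r) fm) ps. set ps \<subseteq> C \<and> (\<forall>v\<in>fvars \<phi>. v < k + length ps) \<and>
        X = {a. length a = k \<and> sat M \<phi> (\<lambda>i. (a @ ps) ! i)})"

definition saturated :: "('f, 'r, 'u) struc \<Rightarrow> 'k rel \<Rightarrow> bool" where
  "saturated M \<kappa> \<longleftrightarrow>
     (\<forall>B F. (card_of B, \<kappa>) \<in> ordLess \<and> (\<forall>X\<in>F. definable M B 1 X) \<and>
        (\<forall>G. finite G \<and> G \<subseteq> F \<longrightarrow> {a. length a = 1} \<inter> \<Inter>G \<noteq> {})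
        \<longrightarrow> {a. length a = 1} \<inter> \<Inter>F \<noteq> {})"

definition automorphism :: "('f, 'r, 'u) struc \<Rightarrow> ('u \<Rightarrow> 'u) \<Rightarrow> bool" where
  "automorphism M g \<longleftrightarrow> bij g \<and> (\<forall>(\<phi> :: ('f, 'r) fm) e. sat M \<phi> e = sat M \<phi> (g \<circ> e))"

definition partial_elementary :: "('f, 'r, 'u) struc \<Rightarrow> 'u set \<Rightarrow> ('u \<Rightarrow> 'u) \<Rightarrow> bool" where
  "partial_elementary M B f \<longleftrightarrow>
     (\<forall>(\<phi> :: ('f, 'r) fm) e. (\<forall>i. e i \<in> B) \<longrightarrow> sat M \<phi> e = sat M \<phi> (f \<circ> e))"

definition strongly_homogeneous :: "('f, 'r, 'u) struc \<Rightarrow> 'k rel \<Rightarrow> bool" where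
  "strongly_homogeneous M \<kappa> \<longleftrightarrow>
     (\<forall>B f. (card_of B, \<kappa>) \<in> ordLess \<and> partial_elementary M B f \<longrightarrow>
        (\<exists>g. automorphism M g \<and> (\<forall>b\<in>B. g b = f b)))"

definition monster :: "('f, 'r, 'u) struc \<Rightarrow> 'k rel \<Rightarrow> bool" where
  "monster M \<kappa> \<longleftrightarrow> Card_order \<kappa> \<and> \<not> finite (Field \<kappa>) \<and>
     (card_of (UNIV :: ('f + 'r) set), \<kappa>) \<in> ordLess \<and>
     saturated M \<kappa> \<and> strongly_homogeneous M \<kappa>"

definition small :: "'k rel \<Rightarrow> 'u set \<Rightarrow> bool" where
  "small \<kappa> A \<longleftrightarrow> (card_of A, \<kappa>) \<in> ordLess"

text \<open>Finitely additive probability measure on L_k(C); only its values on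
  C-definable sets matter.\<close>
definition keisler :: "('f, 'r, 'u) struc \<Rightarrow> 'u set \<Rightarrow> nat \<Rightarrow> ('u list set \<Rightarrow> real) \<Rightarrow> bool" where
  "keisler M C k \<mu> \<longleftrightarrow>
     (\<forall>X. definable M C k X \<longrightarrow> 0 \<le> \<mu> X) \<and>
     \<mu> {a. length a = k} = 1 \<and>
     (\<forall>X Y. definable M C k X \<and> definable M C k Y \<and> X \<inter> Y = {} \<longrightarrow> \<mu> (X \<union> Y) = \<mu> X + \<mu> Y)"

definition agree :: "('f, 'r, 'u) struc \<Rightarrow> 'u set \<Rightarrow> nat \<Rightarrow> ('u list set \<Rightarrow> real) \<Rightarrow> ('u list set \<Rightarrow> real) \<Rightarrow> bool" where
  "agree M C k \<mu> \<nu> \<longleftrightarrow> (\<forall>X. definable M C k X \<longrightarrow> \<mu> X = \<nu> X)"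

text \<open>Projections for x of length n, y of length m, xy the concatenation:
  phi(x) corresponds to phi(x) and y = y.\<close>
definition pi_x :: "nat \<Rightarrow> nat \<Rightarrow> ('u list set \<Rightarrow> real) \<Rightarrow> ('u list set \<Rightarrow> real)" where
  "pi_x n m \<omega> = (\<lambda>X. \<omega> {a @ b | a b. a \<in> X \<and> length a = n \<and> length b = m})"

definition pi_y :: "nat \<Rightarrow> nat \<Rightarrow> ('u list set \<Rightarrow> real) \<Rightarrow> ('u list set \<Rightarrow> real)" where
  "pi_y n m \<omega> = (\<lambda>Y. \<omega> {a @ b | a b. b \<in> Y \<and> length a = n \<and> length b = m})"

definition witnesses :: "('f, 'r, 'u) struc \<Rightarrow> 'u set \<Rightarrow> nat \<Rightarrow> nat \<Rightarrow>
    ('u list set \<Rightarrow> real) \<Rightarrow> ('u list set \<Rightarrow> real) \<Rightarrow> ('u list set \<Rightarrow> real) \<Rightarrow> bool" where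
  "witnesses M A n m lam \<mu> \<nu> \<longleftrightarrow>
     agree M A n (pi_x n m lam) \<mu> \<and>
     (\<forall>\<omega>. keisler M UNIV (n + m) \<omega> \<and> agree M A (n + m) \<omega> lam \<and> agree M UNIV n (pi_x n m \<omega>) \<mu>
        \<longrightarrow> agree M UNIV m (pi_y n m \<omega>) \<nu>)"

definition smooth_global :: "('f, 'r, 'u) struc \<Rightarrow> 'u set \<Rightarrow> nat \<Rightarrow> ('u list set \<Rightarrow> real) \<Rightarrow> bool" where
  "smooth_global M A k \<mu> \<longleftrightarrow>
     (\<forall>\<mu>'. keisler M UNIV k \<mu>' \<and> agree M A k \<mu>' \<mu> \<longrightarrow> agree M UNIV k \<mu>' \<mu>)"

definition smooth_local :: "('f, 'r, 'u) struc \<Rightarrow> 'u set \<Rightarrow> nat \<Rightarrow> ('u list set \<Rightarrow> real) \<Rightarrow> bool" where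
  "smooth_local M A k \<eta> \<longleftrightarrow>
     (\<exists>\<omega>. keisler M UNIV k \<omega> \<and> agree M A k \<omega> \<eta>) \<and>
     (\<forall>\<omega> \<omega>'. keisler M UNIV k \<omega> \<and> agree M A k \<omega> \<eta> \<and>
             keisler M UNIV k \<omega>' \<and> agree M A k \<omega>' \<eta> \<longrightarrow> agree M UNIV k \<omega> \<omega>')"

end

theory Submission
  imports Defs
begin


definition alg :: "'a set \<Rightarrow> 'a set set \<Rightarrow> bool" where
  "alg S D \<longleftrightarrow> D \<subseteq> Pow S \<and> S \<in> D \<and> (\<forall>X\<in>D. S - X \<in> D) \<and> (\<forall>X\<in>D. \<forall>Y\<in>D. X \<union> Y \<in> D)"

definition meas :: "'a set set \<Rightarrow> ('a set \<Rightarrow> real) \<Rightarrow> bool" where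
  "meas D w \<longleftrightarrow> (\<forall>X\<in>D. 0 \<le> w X) \<and> (\<forall>X\<in>D. \<forall>Y\<in>D. X \<inter> Y = {} \<longrightarrow> w (X \<union> Y) = w X + w Y)"

lemma alg_sub: "alg S D \<Longrightarrow> X \<in> D \<Longrightarrow> X \<subseteq> S"
  unfolding alg_def by blast

lemma alg_S: "alg S D \<Longrightarrow> S \<in> D"
  unfolding alg_def by blast

lemma alg_compl: "alg S D \<Longrightarrow> X \<in> D \<Longrightarrow> S - X \<in> D"
  unfolding alg_def by blast

lemma alg_un: "alg S D \<Longrightarrow> X \<in> D \<Longrightarrow> Y \<in> D \<Longrightarrow> X \<union> Y \<in> D"
  unfolding alg_def by blast

lemma alg_empty: "alg S D \<Longrightarrow> {} \<in> D"
  using alg_compl[of S D S] alg_S[of S D] by simp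

lemma alg_diff: assumes "alg S D" "X \<in> D" "Y \<in> D" shows "X - Y \<in> D"
proof -
  have "X - Y = S - ((S - X) \<union> Y)" using alg_sub[OF assms(1,2)] by blast
  then show ?thesis using assms by (metis alg_compl alg_un)
qed

lemma alg_int: assumes "alg S D" "X \<in> D" "Y \<in> D" shows "X \<inter> Y \<in> D"
proof -
  have "X \<inter> Y = X - (X - Y)" by blast
  then show ?thesis using assms by (metis alg_diff)
qed

lemma meas_nonneg: "meas D w \<Longrightarrow> X \<in> D \<Longrightarrow> 0 \<le> w X"
  unfolding meas_def by blast

lemma meas_add: "meas D w \<Longrightarrow> X \<in> D \<Longrightarrow> Y \<in> D \<Longrightarrow> X \<inter> Y = {} \<Longrightarrow> w (X \<union> Y) = w X + w Y"
  unfolding meas_def by blast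

lemma meas_empty: "meas D w \<Longrightarrow> {} \<in> D \<Longrightarrow> w {} = 0"
  using meas_add[of D w "{}" "{}"] by simp

lemma meas_split: assumes "alg S D" "meas D w" "X \<in> D" "Y \<in> D"
  shows "w X = w (X \<inter> Y) + w (X - Y)"
proof -
  have "X = (X \<inter> Y) \<union> (X - Y)" by blast
  then have "w X = w ((X \<inter> Y) \<union> (X - Y))" by simp
  also have "\<dots> = w (X \<inter> Y) + w (X - Y)"
    using assms by (intro meas_add) (auto intro: alg_int alg_diff)
  finally show ?thesis .
qed

lemma meas_mono: assumes "alg S D" "meas D w" "X \<in> D" "Y \<in> D" "X \<subseteq> Y"
  shows "w X \<le> w Y"
proof -
  have "w Y = w (Y \<inter> X) + w (Y - X)" using meas_split assms by blast
  moreover have "Y \<inter> X = X" using assms by blast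
  moreover have "0 \<le> w (Y - X)" using assms by (intro meas_nonneg) (auto intro: alg_diff)
  ultimately show ?thesis by simp
qed

lemma meas_subadd: assumes "alg S D" "meas D w" "X \<in> D" "Y \<in> D"
  shows "w (X \<union> Y) \<le> w X + w Y"
proof -
  have "X \<union> Y = X \<union> (Y - X)" by blast
  then have "w (X \<union> Y) = w X + w (Y - X)"
    using assms by (metis meas_add alg_diff Diff_disjoint)
  moreover have "w (Y - X) \<le> w Y" using assms by (intro meas_mono) (auto intro: alg_diff)
  ultimately show ?thesis by simp
qed

definition outer :: "'a set set \<Rightarrow> ('a set \<Rightarrow> real) \<Rightarrow> 'a set \<Rightarrow> real" where
  "outer D w E = Inf (w ` {Y \<in> D. E \<subseteq> Y})"

definition inner :: "'a set set \<Rightarrow> ('a set \<Rightarrow> real) \<Rightarrow> 'a set \<Rightarrow> real" where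
  "inner D w E = Sup (w ` {Y \<in> D. Y \<subseteq> E})"

lemma outer_le: assumes "meas D w" "Y \<in> D" "E \<subseteq> Y" shows "outer D w E \<le> w Y"
  unfolding outer_def
proof (rule cInf_lower)
  show "w Y \<in> w ` {Y \<in> D. E \<subseteq> Y}" using assms by blast
  show "bdd_below (w ` {Y \<in> D. E \<subseteq> Y})"
    using assms(1) by (intro bdd_belowI[of _ 0]) (auto intro: meas_nonneg)
qed

lemma outer_ge: assumes "alg S D" "E \<subseteq> S" "\<And>Y. Y \<in> D \<Longrightarrow> E \<subseteq> Y \<Longrightarrow> c \<le> w Y"
  shows "c \<le> outer D w E"
  unfolding outer_def
proof (rule cInf_greatest)
  show "w ` {Y \<in> D. E \<subseteq> Y} \<noteq> {}" using assms alg_S by blast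
  show "\<And>x. x \<in> w ` {Y \<in> D. E \<subseteq> Y} \<Longrightarrow> c \<le> x" using assms by blast
qed

lemma outer_nonneg: assumes "alg S D" "meas D w" "E \<subseteq> S" shows "0 \<le> outer D w E"
  using assms by (intro outer_ge[of S]) (auto intro: meas_nonneg)

lemma outer_lt: assumes "alg S D" "E \<subseteq> S" "outer D w E < c"
  shows "\<exists>Y\<in>D. E \<subseteq> Y \<and> w Y < c"
proof (rule ccontr)
  assume "\<not> ?thesis"
  then have "c \<le> outer D w E" using assms by (intro outer_ge[of S]) force+
  then show False using assms by simp
qed

lemma inner_ge: assumes "alg S D" "meas D w" "Y \<in> D" "Y \<subseteq> E" shows "w Y \<le> inner D w E"
  unfolding inner_def
proof (rule cSup_upper)
  show "w Y \<in> w ` {Y \<in> D. Y \<subseteq> E}" using assms by blast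
  show "bdd_above (w ` {Y \<in> D. Y \<subseteq> E})"
    using assms by (intro bdd_aboveI[of _ "w S"]) (auto intro!: meas_mono[OF assms(1,2)] alg_S[OF assms(1)] dest: alg_sub[OF assms(1)])
qed

lemma inner_le: assumes "alg S D" "\<And>Y. Y \<in> D \<Longrightarrow> Y \<subseteq> E \<Longrightarrow> w Y \<le> c"
  shows "inner D w E \<le> c"
  unfolding inner_def
proof (rule cSup_least)
  show "w ` {Y \<in> D. Y \<subseteq> E} \<noteq> {}" using assms alg_empty by blast
  show "\<And>x. x \<in> w ` {Y \<in> D. Y \<subseteq> E} \<Longrightarrow> x \<le> c" using assms by blast
qed

lemma inner_nonneg: assumes "alg S D" "meas D w" shows "0 \<le> inner D w E"
proof -
  have "w {} \<le> inner D w E" using assms by (intro inner_ge) (auto intro: alg_empty)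
  then show ?thesis using assms meas_empty alg_empty by metis
qed

lemma outer_add:
  assumes alg: "alg S D" and m: "meas D w" and "E1 \<inter> E2 = {}" "E1 \<union> E2 \<subseteq> S"
    and P: "P \<in> D" "E1 \<subseteq> P" "E2 \<inter> P = {}"
  shows "outer D w (E1 \<union> E2) = outer D w E1 + outer D w E2"
proof (rule antisym)
  show "outer D w E1 + outer D w E2 \<le> outer D w (E1 \<union> E2)"
  proof (rule outer_ge[OF alg])
    show "E1 \<union> E2 \<subseteq> S" by fact
    fix Y assume Y: "Y \<in> D" "E1 \<union> E2 \<subseteq> Y"
    have "outer D w E1 \<le> w (Y \<inter> P)" using Y P alg m by (intro outer_le) (auto intro: alg_int)
    moreover have "outer D w E2 \<le> w (Y - P)" using Y P alg m by (intro outer_le) (auto intro: alg_diff)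
    ultimately show "outer D w E1 + outer D w E2 \<le> w Y"
      using meas_split[OF alg m Y(1) P(1)] by simp
  qed
next
  have E1S: "E1 \<subseteq> S" and E2S: "E2 \<subseteq> S" using assms by auto
  have key: "outer D w (E1 \<union> E2) \<le> w Y1 + w Y2"
    if "Y1 \<in> D" "E1 \<subseteq> Y1" "Y2 \<in> D" "E2 \<subseteq> Y2" for Y1 Y2
  proof -
    have "outer D w (E1 \<union> E2) \<le> w (Y1 \<union> Y2)" using that alg m by (intro outer_le) (auto intro: alg_un)
    also have "\<dots> \<le> w Y1 + w Y2" using that alg m by (intro meas_subadd) auto
    finally show ?thesis .
  qed
  have "outer D w (E1 \<union> E2) - w Y2 \<le> outer D w E1" if "Y2 \<in> D" "E2 \<subseteq> Y2" for Y2
    using key that by (intro outer_ge[OF alg E1S]) force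
  then have "outer D w (E1 \<union> E2) - outer D w E1 \<le> outer D w E2"
    by (intro outer_ge[OF alg E2S]) force
  then show "outer D w (E1 \<union> E2) \<le> outer D w E1 + outer D w E2" by simp
qed

lemma inner_add:
  assumes alg: "alg S D" and m: "meas D w" and "F1 \<inter> F2 = {}"
    and P: "P \<in> D" "F1 \<subseteq> P" "F2 \<inter> P = {}"
  shows "inner D w (F1 \<union> F2) = inner D w F1 + inner D w F2"
proof (rule antisym)
  show "inner D w (F1 \<union> F2) \<le> inner D w F1 + inner D w F2"
  proof (rule inner_le[OF alg])
    fix Y assume Y: "Y \<in> D" "Y \<subseteq> F1 \<union> F2"
    have "w (Y \<inter> P) \<le> inner D w F1" using Y P alg m by (intro inner_ge) (auto intro: alg_int)
    moreover have "w (Y - P) \<le> inner D w F2" using Y P alg m by (intro inner_ge) (auto intro: alg_diff)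
    ultimately show "w Y \<le> inner D w F1 + inner D w F2"
      using meas_split[OF alg m Y(1) P(1)] by simp
  qed
next
  have key: "w Y1 + w Y2 \<le> inner D w (F1 \<union> F2)"
    if "Y1 \<in> D" "Y1 \<subseteq> F1" "Y2 \<in> D" "Y2 \<subseteq> F2" for Y1 Y2
  proof -
    have "w Y1 + w Y2 = w (Y1 \<union> Y2)" using that assms by (intro meas_add[symmetric]) auto
    also have "\<dots> \<le> inner D w (F1 \<union> F2)" using that alg m by (intro inner_ge) (auto intro: alg_un)
    finally show ?thesis .
  qed
  have "inner D w F1 \<le> inner D w (F1 \<union> F2) - w Y2" if "Y2 \<in> D" "Y2 \<subseteq> F2" for Y2
    using key that by (intro inner_le[OF alg]) force
  then have "inner D w F2 \<le> inner D w (F1 \<union> F2) - inner D w F1"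
    by (intro inner_le[OF alg]) force
  then show "inner D w F1 + inner D w F2 \<le> inner D w (F1 \<union> F2)" by simp
qed

lemma one_step:
  assumes alg: "alg S D" and m: "meas D w" and Z: "Z \<subseteq> S"
  shows "\<exists>D' w'. alg S D' \<and> meas D' w' \<and> D \<subseteq> D' \<and> Z \<in> D' \<and> (\<forall>P\<in>D. w' P = w P)
     \<and> w' Z = outer D w Z"
proof -
  define D' where "D' = {E. \<exists>P\<in>D. \<exists>Q\<in>D. E = (P \<inter> Z) \<union> (Q - Z)}"
  define w' where "w' E = outer D w (E \<inter> Z) + inner D w (E - Z)" for E
  have split1: "((P \<inter> Z) \<union> (Q - Z)) \<inter> Z = P \<inter> Z" for P Q by blast
  have split2: "((P \<inter> Z) \<union> (Q - Z)) - Z = Q - Z" for P Q by blast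
  have sub: "P \<subseteq> S" if "P \<in> D" for P using alg_sub[OF alg that] .
  have "alg S D'"
    unfolding alg_def
  proof (intro conjI ballI)
    show "D' \<subseteq> Pow S" unfolding D'_def using sub Z by blast
    show "S \<in> D'" unfolding D'_def using alg_S[OF alg] Z by blast
    fix X assume "X \<in> D'"
    then obtain P Q where PQ: "P \<in> D" "Q \<in> D" "X = (P \<inter> Z) \<union> (Q - Z)" unfolding D'_def by blast
    have "S - X = ((S - P) \<inter> Z) \<union> ((S - Q) - Z)" using PQ Z sub by blast
    then show "S - X \<in> D'" unfolding D'_def using PQ alg_compl[OF alg] by blast
    fix Y assume "Y \<in> D'"
    then obtain P' Q' where PQ': "P' \<in> D" "Q' \<in> D" "Y = (P' \<inter> Z) \<union> (Q' - Z)" unfolding D'_def by blast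
    have "X \<union> Y = ((P \<union> P') \<inter> Z) \<union> ((Q \<union> Q') - Z)" using PQ PQ' by blast
    then show "X \<union> Y \<in> D'" unfolding D'_def using PQ PQ' alg_un[OF alg] by blast
  qed
  moreover have "meas D' w'"
    unfolding meas_def
  proof (intro conjI ballI impI)
    fix X assume "X \<in> D'"
    then obtain P Q where PQ: "P \<in> D" "Q \<in> D" "X = (P \<inter> Z) \<union> (Q - Z)" unfolding D'_def by blast
    have "X \<inter> Z \<subseteq> S" using Z by blast
    then show "0 \<le> w' X" unfolding w'_def
      using outer_nonneg[OF alg m, of "X \<inter> Z"] inner_nonneg[OF alg m, of "X - Z"] by simp
    fix Y assume "Y \<in> D'" and disj: "X \<inter> Y = {}"
    then obtain P' Q' where PQ': "P' \<in> D" "Q' \<in> D" "Y = (P' \<inter> Z) \<union> (Q' - Z)" unfolding D'_def by blast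
    have "outer D w ((X \<union> Y) \<inter> Z) = outer D w (X \<inter> Z) + outer D w (Y \<inter> Z)"
    proof -
      have "(X \<union> Y) \<inter> Z = (X \<inter> Z) \<union> (Y \<inter> Z)" by blast
      moreover have "outer D w ((X \<inter> Z) \<union> (Y \<inter> Z)) = outer D w (X \<inter> Z) + outer D w (Y \<inter> Z)"
        using disj PQ PQ' Z by (intro outer_add[OF alg m, of _ _ P]) auto
      ultimately show ?thesis by simp
    qed
    moreover have "inner D w ((X \<union> Y) - Z) = inner D w (X - Z) + inner D w (Y - Z)"
    proof -
      have "(X \<union> Y) - Z = (X - Z) \<union> (Y - Z)" by blast
      moreover have "inner D w ((X - Z) \<union> (Y - Z)) = inner D w (X - Z) + inner D w (Y - Z)"
        using disj PQ PQ' Z by (intro inner_add[OF alg m, of _ _ Q]) auto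
      ultimately show ?thesis by simp
    qed
    ultimately show "w' (X \<union> Y) = w' X + w' Y" unfolding w'_def by simp
  qed
  moreover have "D \<subseteq> D'"
  proof
    fix P assume "P \<in> D"
    moreover have "P = (P \<inter> Z) \<union> (P - Z)" by blast
    ultimately show "P \<in> D'" unfolding D'_def by blast
  qed
  moreover have "Z \<in> D'"
  proof -
    have "Z = (S \<inter> Z) \<union> ({} - Z)" using Z by blast
    then show ?thesis unfolding D'_def using alg_S[OF alg] alg_empty[OF alg] by blast
  qed
  moreover have "\<forall>P\<in>D. w' P = w P"
  proof
    fix P assume P: "P \<in> D"
    have a: "inner D w (P - Z) \<le> w P - outer D w (P \<inter> Z)"
    proof (rule inner_le[OF alg])
      fix Y assume Y: "Y \<in> D" "Y \<subseteq> P - Z"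
      have "outer D w (P \<inter> Z) \<le> w (P - Y)" using Y P m alg by (intro outer_le) (auto intro: alg_diff)
      moreover have "w P = w (P \<inter> Y) + w (P - Y)" using meas_split[OF alg m P Y(1)] .
      moreover have "P \<inter> Y = Y" using Y by blast
      ultimately show "w Y \<le> w P - outer D w (P \<inter> Z)" by simp
    qed
    have b: "w P - inner D w (P - Z) \<le> outer D w (P \<inter> Z)"
    proof (rule outer_ge[OF alg])
      show "P \<inter> Z \<subseteq> S" using Z by blast
      fix Y assume Y: "Y \<in> D" "P \<inter> Z \<subseteq> Y"
      have "w (P - Y) \<le> inner D w (P - Z)" using Y P m alg by (intro inner_ge) (auto intro: alg_diff)
      moreover have "w P = w (P \<inter> Y) + w (P - Y)" using meas_split[OF alg m P Y(1)] .
      moreover have "w (P \<inter> Y) \<le> w Y" using Y P m alg by (intro meas_mono) (auto intro: alg_int)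
      ultimately show "w P - inner D w (P - Z) \<le> w Y" by simp
    qed
    show "w' P = w P" unfolding w'_def using a b by simp
  qed
  moreover have "w' Z = outer D w Z"
  proof -
    have "inner D w {} \<le> 0"
    proof (rule inner_le[OF alg])
      fix Y assume "Y \<in> D" "Y \<subseteq> {}"
      then show "w Y \<le> 0" using meas_empty[OF m alg_empty[OF alg]] by simp
    qed
    then have "inner D w {} = 0" using inner_nonneg[OF alg m] by (meson antisym)
    then show ?thesis unfolding w'_def by simp
  qed
  ultimately show ?thesis by blast
qed

lemma ext_all:
  assumes alg: "alg S D" and m: "meas D w"
  shows "\<exists>w'. meas (Pow S) w' \<and> (\<forall>P\<in>D. w' P = w P)"
proof -
  define gr :: "'a set set \<Rightarrow> ('a set \<Rightarrow> real) \<Rightarrow> ('a set \<times> real) set"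
    where "gr D' w' = (\<lambda>X. (X, w' X)) ` D'" for D' w'
  define good where "good D' w' \<longleftrightarrow> alg S D' \<and> meas D' w' \<and> D \<subseteq> D' \<and> (\<forall>P\<in>D. w' P = w P)" for D' w'
  define F where "F = {G. \<exists>D' w'. G = gr D' w' \<and> good D' w'}"
  have base: "gr D w \<in> F" unfolding F_def good_def using assms by blast
  have "\<exists>M\<in>F. \<forall>X\<in>F. M \<subseteq> X \<longrightarrow> X = M"
  proof (rule Zorn_Lemma2, intro ballI)
    fix C assume C: "C \<in> chains F"
    show "\<exists>U\<in>F. \<forall>X\<in>C. X \<subseteq> U"
    proof (cases "C = {}")
      case True then show ?thesis using base by blast
    next
      case False
      have CF: "C \<subseteq> F" and ch: "\<And>A B. A \<in> C \<Longrightarrow> B \<in> C \<Longrightarrow> A \<subseteq> B \<or> B \<subseteq> A"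
        using C unfolding chains_def chain_subset_def by blast+
      define U where "U = \<Union>C"
      define D' where "D' = fst ` U"
      define w' where "w' X = (THE r. (X, r) \<in> U)" for X
      have gG: "\<exists>Dg wg. G = gr Dg wg \<and> good Dg wg" if "G \<in> C" for G
        using that CF unfolding F_def by blast
      have func: "r = r'" if a: "(X, r) \<in> U" "(X, r') \<in> U" for X r r'
      proof -
        obtain A B where AB: "A \<in> C" "B \<in> C" "(X, r) \<in> A" "(X, r') \<in> B" using a unfolding U_def by blast
        from ch[OF AB(1,2)] obtain G where G: "G \<in> C" "(X, r) \<in> G" "(X, r') \<in> G" using AB by blast
        obtain Dg wg where "G = gr Dg wg" using gG[OF G(1)] by blast
        then have "r = wg X" "r' = wg X" using G(2,3) unfolding gr_def by auto
        then show ?thesis by simp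
      qed
      have w'_eq: "w' X = r" if "(X, r) \<in> U" for X r
        unfolding w'_def using that func by (intro the_equality) auto
      have Ueq: "U = gr D' w'"
      proof (intro set_eqI iffI)
        fix p assume p: "p \<in> U"
        obtain X r where pe: "p = (X, r)" by (cases p)
        have "X \<in> D'" unfolding D'_def using p pe by force
        moreover have "r = w' X" using w'_eq p pe by simp
        ultimately show "p \<in> gr D' w'" unfolding gr_def using pe by blast
      next
        fix p assume "p \<in> gr D' w'"
        then obtain X where X: "X \<in> D'" "p = (X, w' X)" unfolding gr_def by blast
        from X(1) obtain q where q: "q \<in> U" "X = fst q" unfolding D'_def by blast
        then have q2: "(X, snd q) \<in> U" by simp
        then have "w' X = snd q" using w'_eq by blast
        then show "p \<in> U" using X q2 by simp
      qed
      have inG: "\<forall>X\<in>Dg. w' X = wg X" if "G \<in> C" "G = gr Dg wg" for G Dg wg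
      proof
        fix X assume "X \<in> Dg"
        then have "(X, wg X) \<in> U" unfolding U_def using that unfolding gr_def by blast
        then show "w' X = wg X" using w'_eq by blast
      qed
      have domG: "Dg \<subseteq> D'" if "G \<in> C" "G = gr Dg wg" for G Dg wg
      proof
        fix X assume "X \<in> Dg"
        then have "(X, wg X) \<in> U" unfolding U_def using that unfolding gr_def by blast
        then have "fst (X, wg X) \<in> fst ` U" by (rule imageI)
        then show "X \<in> D'" unfolding D'_def by simp
      qed
      have pair: "\<exists>Dg wg. good Dg wg \<and> X \<in> Dg \<and> Y \<in> Dg \<and> Dg \<subseteq> D' \<and> (\<forall>Z\<in>Dg. w' Z = wg Z)"
        if a: "X \<in> D'" "Y \<in> D'" for X Y
      proof -
        obtain A where A: "A \<in> C" "X \<in> fst ` A" using a(1) unfolding D'_def U_def by blast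
        obtain B where B: "B \<in> C" "Y \<in> fst ` B" using a(2) unfolding D'_def U_def by blast
        from ch[OF A(1) B(1)] obtain G where G: "G \<in> C" "X \<in> fst ` G" "Y \<in> fst ` G" using A B by blast
        obtain Dg wg where g: "G = gr Dg wg" "good Dg wg" using gG[OF G(1)] by blast
        have "fst ` G = Dg" unfolding g gr_def image_image by simp
        moreover have "Dg \<subseteq> D'" using domG[OF G(1) g(1)] .
        moreover have "\<forall>Z\<in>Dg. w' Z = wg Z" using inG[OF G(1) g(1)] .
        ultimately show ?thesis using g(2) G(2,3) by blast
      qed
      obtain G0 where G0: "G0 \<in> C" using False by blast
      obtain D0 w0 where g0: "G0 = gr D0 w0" "good D0 w0" using gG[OF G0] by blast
      have "good D' w'"
        unfolding good_def
      proof (intro conjI)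
        show "alg S D'"
          unfolding alg_def
        proof (intro conjI ballI)
          show "D' \<subseteq> Pow S"
          proof
            fix X assume "X \<in> D'"
            then obtain Dg wg where "good Dg wg" "X \<in> Dg" using pair by blast
            then show "X \<in> Pow S" unfolding good_def using alg_sub by (metis PowI)
          qed
          have "S \<in> D0" using g0(2) alg_S unfolding good_def by blast
          then show "S \<in> D'" using domG[OF G0 g0(1)] by blast
          fix X assume X: "X \<in> D'"
          then obtain Dg wg where "good Dg wg" "X \<in> Dg" "Dg \<subseteq> D'" using pair by blast
          then show "S - X \<in> D'" unfolding good_def using alg_compl by blast
          fix Y assume Y: "Y \<in> D'"
          obtain Dg wg where "good Dg wg" "X \<in> Dg" "Y \<in> Dg" "Dg \<subseteq> D'" using pair[OF X Y] by blast
          then show "X \<union> Y \<in> D'" unfolding good_def using alg_un by blast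
        qed
        show "meas D' w'"
          unfolding meas_def
        proof (intro conjI ballI impI)
          fix X assume X: "X \<in> D'"
          then obtain Dg wg where "good Dg wg" "X \<in> Dg" "\<forall>Z\<in>Dg. w' Z = wg Z" using pair by blast
          then show "0 \<le> w' X" unfolding good_def using meas_nonneg by metis
          fix Y assume Y: "Y \<in> D'" "X \<inter> Y = {}"
          obtain Dg wg where h: "good Dg wg" "X \<in> Dg" "Y \<in> Dg" "\<forall>Z\<in>Dg. w' Z = wg Z" using pair[OF X Y(1)] by blast
          then have "X \<union> Y \<in> Dg" unfolding good_def using alg_un by blast
          then show "w' (X \<union> Y) = w' X + w' Y" using h Y(2) unfolding good_def using meas_add by metis
        qed
        show "D \<subseteq> D'" using g0 domG[OF G0 g0(1)] unfolding good_def by blast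
        show "\<forall>P\<in>D. w' P = w P"
        proof
          fix P assume P: "P \<in> D"
          then have "P \<in> D0" using g0(2) unfolding good_def by blast
          then have "w' P = w0 P" using inG[OF G0 g0(1)] by blast
          also have "w0 P = w P" using g0(2) P unfolding good_def by blast
          finally show "w' P = w P" .
        qed
      qed
      then have "U \<in> F" unfolding F_def using Ueq by blast
      moreover have "\<forall>X\<in>C. X \<subseteq> U" unfolding U_def by blast
      ultimately show ?thesis by blast
    qed
  qed
  then obtain M where M: "M \<in> F" and max: "\<And>X. X \<in> F \<Longrightarrow> M \<subseteq> X \<Longrightarrow> X = M" by blast
  obtain Dm wm where Mg: "M = gr Dm wm" "good Dm wm" using M unfolding F_def by blast
  have "Dm = Pow S"
  proof (rule ccontr)
    assume ne: "Dm \<noteq> Pow S"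
    have "Dm \<subseteq> Pow S" using Mg unfolding good_def alg_def by blast
    then obtain Z where Z: "Z \<subseteq> S" "Z \<notin> Dm" using ne by blast
    obtain D'' w'' where h: "alg S D''" "meas D'' w''" "Dm \<subseteq> D''" "Z \<in> D''" "\<forall>P\<in>Dm. w'' P = wm P"
      using one_step[of S Dm wm Z] Mg Z unfolding good_def by blast
    have "good D'' w''" using h Mg unfolding good_def by auto
    then have "gr D'' w'' \<in> F" unfolding F_def by blast
    moreover have "M \<subseteq> gr D'' w''" using h Mg unfolding gr_def by force
    ultimately have "gr D'' w'' = M" using max by blast
    then have "(Z, w'' Z) \<in> gr Dm wm" using h Mg unfolding gr_def by blast
    then show False using Z unfolding gr_def by blast
  qed
  then show ?thesis using Mg unfolding good_def by blast
qed

lemma ext_outer: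
  assumes alg: "alg S D" and m: "meas D w" and Z: "Z \<subseteq> S"
  shows "\<exists>w'. meas (Pow S) w' \<and> (\<forall>P\<in>D. w' P = w P) \<and> w' Z = outer D w Z"
proof -
  obtain D' w' where h: "alg S D'" "meas D' w'" "D \<subseteq> D'" "Z \<in> D'" "\<forall>P\<in>D. w' P = w P"
     "w' Z = outer D w Z" using one_step[OF assms] by blast
  obtain w'' where h2: "meas (Pow S) w''" "\<forall>P\<in>D'. w'' P = w' P" using ext_all[OF h(1,2)] by blast
  have "\<forall>P\<in>D. w'' P = w P"
  proof
    fix P assume "P \<in> D"
    then have "P \<in> D'" using h(3) by blast
    then show "w'' P = w P" using h(5) h2(2) \<open>P \<in> D\<close> by simp
  qed
  moreover have "w'' Z = outer D w Z" using h(4,6) h2(2) by simp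
  ultimately show ?thesis using h2 by blast
qed



fun trename :: "(nat \<Rightarrow> nat) \<Rightarrow> 'f trm \<Rightarrow> 'f trm" where
  "trename g (Var v) = Var (g v)"
| "trename g (Fn f ts) = Fn f (map (trename g) ts)"

fun frename :: "(nat \<Rightarrow> nat) \<Rightarrow> ('f, 'r) fm \<Rightarrow> ('f, 'r) fm" where
  "frename g (Eq s t) = Eq (trename g s) (trename g t)"
| "frename g (Rel r ts) = Rel r (map (trename g) ts)"
| "frename g (Neg p) = Neg (frename g p)"
| "frename g (Conj p q) = Conj (frename g p) (frename g q)"
| "frename g (Ex v p) = Ex (g v) (frename g p)"

lemma tval_rename: "tval M e (trename g t) = tval M (e \<circ> g) t"
  by (induction t) (simp_all cong: map_cong)

lemma tvars_rename: "tvars (trename g t) = g ` tvars t"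
  by (induction t) auto

lemma sat_rename: "inj g \<Longrightarrow> sat M (frename g p) e = sat M p (e \<circ> g)"
proof (induction p arbitrary: e)
  case (Ex v p)
  have "(e(g v := a)) \<circ> g = (e \<circ> g)(v := a)" for a
    using Ex.prems by (auto simp: fun_eq_iff inj_eq)
  then show ?case by (simp only: frename.simps sat.simps Ex.IH[OF Ex.prems])
qed (simp_all add: tval_rename comp_def)

lemma fvars_rename: "inj g \<Longrightarrow> fvars (frename g p) = g ` fvars p"
  by (induction p) (auto simp: tvars_rename inj_eq)

lemma tval_cong: "(\<forall>v\<in>tvars t. e v = e' v) \<Longrightarrow> tval M e t = tval M e' t"
proof (induction t)
  case (Fn f ts)
  have "map (tval M e) ts = map (tval M e') ts"
    by (rule list.map_cong0) (use Fn in auto)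
  then show ?case by (metis tval.simps(2))
qed simp

lemma sat_cong: "(\<forall>v\<in>fvars p. e v = e' v) \<Longrightarrow> sat M p e = sat M p e'"
proof (induction p arbitrary: e e')
  case (Eq s t) then show ?case using tval_cong[of s e e' M] tval_cong[of t e e' M] by simp
next
  case (Rel r ts)
  have "map (tval M e) ts = map (tval M e') ts"
  proof (rule list.map_cong0)
    fix t assume "t \<in> set ts"
    then show "tval M e t = tval M e' t" using Rel by (intro tval_cong) auto
  qed
  then show ?case by (metis sat.simps(2))
next
  case (Ex v p)
  have "sat M p (e(v := a)) = sat M p (e'(v := a))" for a
  proof (rule Ex.IH)
    show "\<forall>u\<in>fvars p. (e(v := a)) u = (e'(v := a)) u" using Ex.prems by simp
  qed
  then show ?case by simp
next
  case (Neg p) then show ?case by simp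
next
  case (Conj p q)
  have "sat M p e = sat M p e'" using Conj.prems by (intro Conj.IH(1)) simp
  moreover have "sat M q e = sat M q e'" using Conj.prems by (intro Conj.IH(2)) simp
  ultimately show ?case by simp
qed

definition exs :: "nat list \<Rightarrow> ('f, 'r) fm \<Rightarrow> ('f, 'r) fm" where
  "exs vs p = foldr Ex vs p"

lemma sat_exs: "sat M (exs vs p) e = (\<exists>h. sat M p (\<lambda>i. if i \<in> set vs then h i else e i))"
proof (induction vs arbitrary: e)
  case Nil then show ?case by (simp add: exs_def)
next
  case (Cons v vs)
  have "sat M (exs (v # vs) p) e = (\<exists>a h. sat M p (\<lambda>i. if i \<in> set vs then h i else (e(v := a)) i))"
    using Cons by (simp add: exs_def)
  also have "\<dots> = (\<exists>h. sat M p (\<lambda>i. if i \<in> set (v # vs) then h i else e i))"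
  proof
    assume "\<exists>a h. sat M p (\<lambda>i. if i \<in> set vs then h i else (e(v := a)) i)"
    then obtain a h where "sat M p (\<lambda>i. if i \<in> set vs then h i else (e(v := a)) i)" by blast
    moreover have "(\<lambda>i. if i \<in> set vs then h i else (e(v := a)) i) =
       (\<lambda>i. if i \<in> set (v # vs) then (h(v := (if v \<in> set vs then h v else a))) i else e i)"
      by (auto simp: fun_eq_iff)
    ultimately show "\<exists>h. sat M p (\<lambda>i. if i \<in> set (v # vs) then h i else e i)" by metis
  next
    assume "\<exists>h. sat M p (\<lambda>i. if i \<in> set (v # vs) then h i else e i)"
    then obtain h where "sat M p (\<lambda>i. if i \<in> set (v # vs) then h i else e i)" by blast
    moreover have "(\<lambda>i. if i \<in> set (v # vs) then h i else e i) =
       (\<lambda>i. if i \<in> set vs then h i else (e(v := h v)) i)"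
      by (auto simp: fun_eq_iff)
    ultimately show "\<exists>a h. sat M p (\<lambda>i. if i \<in> set vs then h i else (e(v := a)) i)" by metis
  qed
  finally show ?case .
qed

lemma fvars_exs: "fvars (exs vs p) = fvars p - set vs"
  by (induction vs) (auto simp: exs_def)



lemma def_sub: "definable M C k X \<Longrightarrow> X \<subseteq> {a. length a = k}"
  unfolding definable_def by blast

lemma def_mono: "C \<subseteq> C' \<Longrightarrow> definable M C k X \<Longrightarrow> definable M C' k X"
  unfolding definable_def by blast

lemma def_full: "definable M C k {a. length a = k}"
  unfolding definable_def
  by (rule exI[of _ "Neg (Ex 0 (Neg (Eq (Var 0) (Var 0))))"], rule exI[of _ "[]"]) simp

lemma def_compl: assumes "definable M C k X" shows "definable M C k ({a. length a = k} - X)"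
proof -
  obtain \<phi> ps where 1: "set ps \<subseteq> C" "\<forall>v\<in>fvars \<phi>. v < k + length ps"
    "X = {a. length a = k \<and> sat M \<phi> (\<lambda>i. (a @ ps) ! i)}"
    using assms unfolding definable_def by blast
  have "{a. length a = k} - X = {a. length a = k \<and> sat M (Neg \<phi>) (\<lambda>i. (a @ ps) ! i)}"
    using 1 by auto
  then show ?thesis unfolding definable_def using 1 by (intro exI[of _ "Neg \<phi>"] exI[of _ ps]) auto
qed

lemma def_inter: assumes "definable M C k X" "definable M C k Y" shows "definable M C k (X \<inter> Y)"
proof -
  obtain \<phi> ps where 1: "set ps \<subseteq> C" "\<forall>v\<in>fvars \<phi>. v < k + length ps"
    "X = {a. length a = k \<and> sat M \<phi> (\<lambda>i. (a @ ps) ! i)}"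
    using assms(1) unfolding definable_def by blast
  obtain \<psi> qs where 2: "set qs \<subseteq> C" "\<forall>v\<in>fvars \<psi>. v < k + length qs"
    "Y = {a. length a = k \<and> sat M \<psi> (\<lambda>i. (a @ qs) ! i)}"
    using assms(2) unfolding definable_def by blast
  define g where "g j = (if j < k then j else j + length ps)" for j
  have inj: "inj g" unfolding inj_def g_def by auto
  define \<chi> where "\<chi> = Conj \<phi> (frename g \<psi>)"
  have fv: "\<forall>v\<in>fvars \<chi>. v < k + length (ps @ qs)"
    using 1(2) 2(2) unfolding \<chi>_def by (auto simp: fvars_rename[OF inj] g_def)
  have a1: "sat M \<phi> (\<lambda>i. (a @ ps @ qs) ! i) = sat M \<phi> (\<lambda>i. (a @ ps) ! i)" if "length a = k" for a
    by (rule sat_cong) (use 1(2) that in \<open>auto simp: nth_append\<close>)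
  have a2: "sat M (frename g \<psi>) (\<lambda>i. (a @ ps @ qs) ! i) = sat M \<psi> (\<lambda>i. (a @ qs) ! i)" if "length a = k" for a
    unfolding sat_rename[OF inj] by (rule sat_cong) (use 2(2) that in \<open>auto simp: nth_append g_def\<close>)
  have "X \<inter> Y = {a. length a = k \<and> sat M \<chi> (\<lambda>i. (a @ ps @ qs) ! i)}"
    using 1(3) 2(3) a1 a2 unfolding \<chi>_def by auto
  then show ?thesis unfolding definable_def using 1(1) 2(1) fv
    by (intro exI[of _ \<chi>] exI[of _ "ps @ qs"]) auto
qed

lemma def_cyl_x: assumes "definable M C n X"
  shows "definable M C (n + m) {a @ b | a b. a \<in> X \<and> length a = n \<and> length b = m}"
proof -
  obtain \<phi> ps where 1: "set ps \<subseteq> C" "\<forall>v\<in>fvars \<phi>. v < n + length ps"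
    "X = {a. length a = n \<and> sat M \<phi> (\<lambda>i. (a @ ps) ! i)}"
    using assms unfolding definable_def by blast
  define g where "g j = (if j < n then j else j + m)" for j
  have inj: "inj g" unfolding inj_def g_def by auto
  have fv: "\<forall>v\<in>fvars (frename g \<phi>). v < n + m + length ps"
    using 1(2) by (auto simp: fvars_rename[OF inj] g_def)
  have a: "sat M (frename g \<phi>) (\<lambda>i. (c @ ps) ! i) = sat M \<phi> (\<lambda>i. (take n c @ ps) ! i)"
    if "length c = n + m" for c
    unfolding sat_rename[OF inj] by (rule sat_cong) (use 1(2) that in \<open>auto simp: nth_append g_def\<close>)
  have "{a @ b | a b. a \<in> X \<and> length a = n \<and> length b = m} =
      {c. length c = n + m \<and> sat M (frename g \<phi>) (\<lambda>i. (c @ ps) ! i)}"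
  proof (intro set_eqI iffI)
    fix c assume "c \<in> {a @ b | a b. a \<in> X \<and> length a = n \<and> length b = m}"
    then obtain a b where "c = a @ b" "a \<in> X" "length a = n" "length b = m" by blast
    then show "c \<in> {c. length c = n + m \<and> sat M (frename g \<phi>) (\<lambda>i. (c @ ps) ! i)}"
      using a[of c] 1(3) by auto
  next
    fix c assume c: "c \<in> {c. length c = n + m \<and> sat M (frename g \<phi>) (\<lambda>i. (c @ ps) ! i)}"
    then have "take n c \<in> X" using a[of c] 1(3) by auto
    moreover have "c = take n c @ drop n c" by simp
    moreover have "length (take n c) = n" using c by simp
    moreover have "length (drop n c) = m" using c by simp
    ultimately show "c \<in> {a @ b | a b. a \<in> X \<and> length a = n \<and> length b = m}" by blast
  qed
  then show ?thesis unfolding definable_def using 1(1) fv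
    by (intro exI[of _ "frename g \<phi>"] exI[of _ ps]) auto
qed

lemma def_cyl_y: assumes "definable M C m Y"
  shows "definable M C (n + m) {a @ b | a b. b \<in> Y \<and> length a = n \<and> length b = m}"
proof -
  obtain \<phi> ps where 1: "set ps \<subseteq> C" "\<forall>v\<in>fvars \<phi>. v < m + length ps"
    "Y = {a. length a = m \<and> sat M \<phi> (\<lambda>i. (a @ ps) ! i)}"
    using assms unfolding definable_def by blast
  define g where "g j = j + n" for j
  have inj: "inj g" unfolding inj_def g_def by auto
  have fv: "\<forall>v\<in>fvars (frename g \<phi>). v < n + m + length ps"
    using 1(2) by (auto simp: fvars_rename[OF inj] g_def)
  have a: "sat M (frename g \<phi>) (\<lambda>i. (c @ ps) ! i) = sat M \<phi> (\<lambda>i. (drop n c @ ps) ! i)"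
    if "length c = n + m" for c
    unfolding sat_rename[OF inj] by (rule sat_cong) (use 1(2) that in \<open>auto simp: nth_append g_def add.commute\<close>)
  have "{a @ b | a b. b \<in> Y \<and> length a = n \<and> length b = m} =
      {c. length c = n + m \<and> sat M (frename g \<phi>) (\<lambda>i. (c @ ps) ! i)}"
  proof (intro set_eqI iffI)
    fix c assume "c \<in> {a @ b | a b. b \<in> Y \<and> length a = n \<and> length b = m}"
    then obtain a b where "c = a @ b" "b \<in> Y" "length a = n" "length b = m" by blast
    then show "c \<in> {c. length c = n + m \<and> sat M (frename g \<phi>) (\<lambda>i. (c @ ps) ! i)}"
      using a[of c] 1(3) by auto
  next
    fix c assume c: "c \<in> {c. length c = n + m \<and> sat M (frename g \<phi>) (\<lambda>i. (c @ ps) ! i)}"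
    then have "drop n c \<in> Y" using a[of c] 1(3) by auto
    moreover have "c = take n c @ drop n c" by simp
    moreover have "length (take n c) = n" using c by simp
    moreover have "length (drop n c) = m" using c by simp
    ultimately show "c \<in> {a @ b | a b. b \<in> Y \<and> length a = n \<and> length b = m}" by blast
  qed
  then show ?thesis unfolding definable_def using 1(1) fv
    by (intro exI[of _ "frename g \<phi>"] exI[of _ ps]) auto
qed

lemma def_ex_y: assumes "definable M C (n + m) W"
  shows "definable M C n {a. length a = n \<and> (\<exists>b. length b = m \<and> a @ b \<in> W)}"
proof -
  obtain \<phi> ps where 1: "set ps \<subseteq> C" "\<forall>v\<in>fvars \<phi>. v < n + m + length ps"
    "W = {c. length c = n + m \<and> sat M \<phi> (\<lambda>i. (c @ ps) ! i)}"
    using assms unfolding definable_def by blast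
  define L where "L = length ps"
  define g where "g j = (if j < n then j else if j < n + m then j + L else if j < n + m + L then j - m else j)" for j
  have inj: "inj g" unfolding inj_def g_def by auto
  define V where "V = [n + L..<n + L + m]"
  define \<chi> where "\<chi> = exs V (frename g \<phi>)"
  have fv: "\<forall>v\<in>fvars \<chi>. v < n + length ps"
    using 1(2) unfolding \<chi>_def V_def L_def by (auto simp: fvars_exs fvars_rename[OF inj] g_def L_def)
  have key: "sat M \<phi> ((\<lambda>i. if i \<in> set V then h i else (a @ ps) ! i) \<circ> g) = sat M \<phi> (\<lambda>i. (a @ b @ ps) ! i)"
    if "length a = n" "length b = m" "\<forall>j<m. h (n + L + j) = b ! j" for a b h
  proof (rule sat_cong, intro ballI)
    fix v assume v: "v \<in> fvars \<phi>"
    then have vl: "v < n + m + L" using 1(2) L_def by auto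
    consider "v < n" | "n \<le> v" "v < n + m" | "n + m \<le> v" by linarith
    then show "((\<lambda>i. if i \<in> set V then h i else (a @ ps) ! i) \<circ> g) v = (a @ b @ ps) ! v"
    proof cases
      case 1
      have gv: "g v = v" using 1 by (simp add: g_def)
      have nV: "v \<notin> set V" using 1 by (simp add: V_def)
      have "((\<lambda>i. if i \<in> set V then h i else (a @ ps) ! i) \<circ> g) v = a ! v"
        using gv nV 1 that(1) by (simp add: nth_append)
      moreover have "(a @ b @ ps) ! v = a ! v" using 1 that(1) by (simp add: nth_append)
      ultimately show ?thesis by simp
    next
      case 2
      have lt: "v - n < m" using 2 by linarith
      have e1: "h (n + L + (v - n)) = b ! (v - n)" by (rule that(3)[rule_format, OF lt])
      have e2: "n + L + (v - n) = v + L" using 2 by linarith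
      have hv: "h (v + L) = b ! (v - n)" using e1 unfolding e2 .
      have gv: "g v = v + L" using 2 by (simp add: g_def)
      have inV: "v + L \<in> set V" using 2 by (simp add: V_def)
      have "((\<lambda>i. if i \<in> set V then h i else (a @ ps) ! i) \<circ> g) v = b ! (v - n)"
        using gv inV hv by simp
      moreover have "(a @ b @ ps) ! v = b ! (v - n)" using 2 that(1,2) lt by (simp add: nth_append)
      ultimately show ?thesis by simp
    next
      case 3
      have gv: "g v = v - m" using 3 vl by (simp add: g_def)
      have lt: "v - m < n + L" "n \<le> v - m" using 3 vl by linarith+
      then have nV: "v - m \<notin> set V" by (simp add: V_def)
      have "((\<lambda>i. if i \<in> set V then h i else (a @ ps) ! i) \<circ> g) v = ps ! (v - m - n)"
        using gv nV lt that(1) by (simp add: nth_append)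
      moreover have "(a @ b @ ps) ! v = ps ! (v - m - n)"
      proof -
        have "\<not> v - n < m" using 3 by linarith
        moreover have "v - (n + m) = v - m - n" by simp
        ultimately show ?thesis using 3 that(1,2) by (simp add: nth_append)
      qed
      ultimately show ?thesis by simp
    qed
  qed
  have "{a. length a = n \<and> (\<exists>b. length b = m \<and> a @ b \<in> W)} =
     {a. length a = n \<and> sat M \<chi> (\<lambda>i. (a @ ps) ! i)}"
  proof (intro set_eqI iffI)
    fix a assume "a \<in> {a. length a = n \<and> (\<exists>b. length b = m \<and> a @ b \<in> W)}"
    then obtain b where ab: "length a = n" "length b = m" "a @ b \<in> W" by blast
    define h where "h i = b ! (i - n - L)" for i
    have "\<forall>j<m. h (n + L + j) = b ! j" unfolding h_def by simp
    then have "sat M \<phi> ((\<lambda>i. if i \<in> set V then h i else (a @ ps) ! i) \<circ> g)"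
      using key[OF ab(1,2)] ab(3) 1(3) by auto
    then have "sat M \<chi> (\<lambda>i. (a @ ps) ! i)"
      unfolding \<chi>_def sat_exs sat_rename[OF inj] by blast
    then show "a \<in> {a. length a = n \<and> sat M \<chi> (\<lambda>i. (a @ ps) ! i)}" using ab by simp
  next
    fix a assume a: "a \<in> {a. length a = n \<and> sat M \<chi> (\<lambda>i. (a @ ps) ! i)}"
    then obtain h where h: "sat M \<phi> ((\<lambda>i. if i \<in> set V then h i else (a @ ps) ! i) \<circ> g)"
      unfolding \<chi>_def sat_exs sat_rename[OF inj] by blast
    define b where "b = map (\<lambda>j. h (n + L + j)) [0..<m]"
    have bl: "length b = m" "\<forall>j<m. h (n + L + j) = b ! j" unfolding b_def by auto
    have "sat M \<phi> (\<lambda>i. (a @ b @ ps) ! i)" using key[OF _ bl] h a by simp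
    then have "a @ b \<in> W" using 1(3) a bl by simp
    then show "a \<in> {a. length a = n \<and> (\<exists>b. length b = m \<and> a @ b \<in> W)}" using a bl by blast
  qed
  then show ?thesis unfolding definable_def using 1(1) fv
    by (intro exI[of _ \<chi>] exI[of _ ps]) auto
qed

lemma def_ex_x: assumes "definable M C (n + m) W"
  shows "definable M C m {b. length b = m \<and> (\<exists>a. length a = n \<and> a @ b \<in> W)}"
proof -
  obtain \<phi> ps where 1: "set ps \<subseteq> C" "\<forall>v\<in>fvars \<phi>. v < n + m + length ps"
    "W = {c. length c = n + m \<and> sat M \<phi> (\<lambda>i. (c @ ps) ! i)}"
    using assms unfolding definable_def by blast
  define L where "L = length ps"
  define g where "g j = (if j < n then j + m + L else if j < n + m + L then j - n else j)" for j
  have inj: "inj g" unfolding inj_def g_def by auto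
  define V where "V = [m + L..<m + L + n]"
  define \<chi> where "\<chi> = exs V (frename g \<phi>)"
  have fv: "\<forall>v\<in>fvars \<chi>. v < m + length ps"
    using 1(2) unfolding \<chi>_def V_def L_def by (auto simp: fvars_exs fvars_rename[OF inj] g_def L_def)
  have key: "sat M \<phi> ((\<lambda>i. if i \<in> set V then h i else (b @ ps) ! i) \<circ> g) = sat M \<phi> (\<lambda>i. (a @ b @ ps) ! i)"
    if "length a = n" "length b = m" "\<forall>j<n. h (m + L + j) = a ! j" for a b h
  proof (rule sat_cong, intro ballI)
    fix v assume v: "v \<in> fvars \<phi>"
    then have vl: "v < n + m + L" using 1(2) L_def by auto
    consider "v < n" | "n \<le> v" "v < n + m" | "n + m \<le> v" by linarith
    then show "((\<lambda>i. if i \<in> set V then h i else (b @ ps) ! i) \<circ> g) v = (a @ b @ ps) ! v"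
    proof cases
      case 1
      have e1: "h (m + L + v) = a ! v" by (rule that(3)[rule_format, OF 1])
      have gv: "g v = m + L + v" using 1 by (simp add: g_def)
      have inV: "m + L + v \<in> set V" using 1 by (simp add: V_def)
      have "((\<lambda>i. if i \<in> set V then h i else (b @ ps) ! i) \<circ> g) v = a ! v"
        using gv inV e1 by simp
      moreover have "(a @ b @ ps) ! v = a ! v" using 1 that(1) by (simp add: nth_append)
      ultimately show ?thesis by simp
    next
      case 2
      have gv: "g v = v - n" using 2 by (simp add: g_def)
      have nV: "v - n \<notin> set V" using 2 by (simp add: V_def)
      have lt: "v - n < m" using 2 by simp
      have "((\<lambda>i. if i \<in> set V then h i else (b @ ps) ! i) \<circ> g) v = b ! (v - n)"
        using gv nV lt that(2) by (simp add: nth_append)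
      moreover have "(a @ b @ ps) ! v = b ! (v - n)" using 2 that(1,2) lt by (simp add: nth_append)
      ultimately show ?thesis by simp
    next
      case 3
      have gv: "g v = v - n" using 3 vl by (simp add: g_def)
      have lt: "v - n < m + L" "m \<le> v - n" using 3 vl by linarith+
      then have nV: "v - n \<notin> set V" by (simp add: V_def)
      have "((\<lambda>i. if i \<in> set V then h i else (b @ ps) ! i) \<circ> g) v = ps ! (v - n - m)"
        using gv nV lt that(2) by (simp add: nth_append)
      moreover have "(a @ b @ ps) ! v = ps ! (v - n - m)"
      proof -
        have "\<not> v - n < m" using 3 by linarith
        then show ?thesis using 3 that(1,2) by (simp add: nth_append)
      qed
      ultimately show ?thesis by simp
    qed
  qed
  have "{b. length b = m \<and> (\<exists>a. length a = n \<and> a @ b \<in> W)} =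
     {b. length b = m \<and> sat M \<chi> (\<lambda>i. (b @ ps) ! i)}"
  proof (intro set_eqI iffI)
    fix b assume "b \<in> {b. length b = m \<and> (\<exists>a. length a = n \<and> a @ b \<in> W)}"
    then obtain a where ab: "length a = n" "length b = m" "a @ b \<in> W" by blast
    define h where "h i = a ! (i - m - L)" for i
    have "\<forall>j<n. h (m + L + j) = a ! j" unfolding h_def by simp
    then have "sat M \<phi> ((\<lambda>i. if i \<in> set V then h i else (b @ ps) ! i) \<circ> g)"
      using key[OF ab(1,2)] ab(3) 1(3) by auto
    then have "sat M \<chi> (\<lambda>i. (b @ ps) ! i)"
      unfolding \<chi>_def sat_exs sat_rename[OF inj] by blast
    then show "b \<in> {b. length b = m \<and> sat M \<chi> (\<lambda>i. (b @ ps) ! i)}" using ab by simp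
  next
    fix b assume b: "b \<in> {b. length b = m \<and> sat M \<chi> (\<lambda>i. (b @ ps) ! i)}"
    then obtain h where h: "sat M \<phi> ((\<lambda>i. if i \<in> set V then h i else (b @ ps) ! i) \<circ> g)"
      unfolding \<chi>_def sat_exs sat_rename[OF inj] by blast
    define a where "a = map (\<lambda>j. h (m + L + j)) [0..<n]"
    have al: "length a = n" "\<forall>j<n. h (m + L + j) = a ! j" unfolding a_def by auto
    have "sat M \<phi> (\<lambda>i. (a @ b @ ps) ! i)" using key[OF al(1) _ al(2)] h b by simp
    then have "a @ b \<in> W" using 1(3) b al by simp
    then show "b \<in> {b. length b = m \<and> (\<exists>a. length a = n \<and> a @ b \<in> W)}" using b al by blast
  qed
  then show ?thesis unfolding definable_def using 1(1) fv
    by (intro exI[of _ \<chi>] exI[of _ ps]) auto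
qed



lemma def_alg: "alg {a. length a = k} {X. definable M C k X}"
  unfolding alg_def
proof (intro conjI ballI)
  show "{X. definable M C k X} \<subseteq> Pow {a. length a = k}"
  proof
    fix X assume "X \<in> {X. definable M C k X}"
    then have "X \<subseteq> {a. length a = k}" using def_sub by (metis mem_Collect_eq)
    then show "X \<in> Pow {a. length a = k}" by simp
  qed
  show "{a. length a = k} \<in> {X. definable M C k X}" using def_full by (metis mem_Collect_eq)
  fix X assume X: "X \<in> {X. definable M C k X}"
  then show "{a. length a = k} - X \<in> {X. definable M C k X}" using def_compl by (metis mem_Collect_eq)
  fix Y assume Y: "Y \<in> {X. definable M C k X}"
  have XS: "X \<subseteq> {a. length a = k}" using X def_sub by (metis mem_Collect_eq)
  have YS: "Y \<subseteq> {a. length a = k}" using Y def_sub by (metis mem_Collect_eq)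
  have eq: "X \<union> Y = {a. length a = k} - (({a. length a = k} - X) \<inter> ({a. length a = k} - Y))"
    using XS YS by blast
  have "definable M C k ({a. length a = k} - (({a. length a = k} - X) \<inter> ({a. length a = k} - Y)))"
    using X Y by (intro def_compl def_inter) auto
  then show "X \<union> Y \<in> {X. definable M C k X}" unfolding eq by simp
qed

lemma keisler_meas: "keisler M C k w \<Longrightarrow> meas {X. definable M C k X} w"
  unfolding keisler_def meas_def by blast

lemma keisler_mono: "keisler M C k w \<Longrightarrow> definable M C k X \<Longrightarrow> definable M C k Y \<Longrightarrow> X \<subseteq> Y \<Longrightarrow> w X \<le> w Y"
  by (rule meas_mono[OF def_alg keisler_meas]) auto

lemma keisler_of_meas:
  assumes "meas (Pow {a. length a = k}) w" "w {a. length a = k} = 1"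
  shows "keisler M C k w"
  unfolding keisler_def
proof (intro conjI allI impI)
  fix X assume "definable M C k X"
  then have "X \<in> Pow {a. length a = k}" using def_sub by simp
  then show "0 \<le> w X" using assms(1) by (rule meas_nonneg[rotated])
next
  show "w {a. length a = k} = 1" by fact
next
  fix X Y assume h: "definable M C k X \<and> definable M C k Y \<and> X \<inter> Y = {}"
  then have "X \<in> Pow {a. length a = k}" "Y \<in> Pow {a. length a = k}"
    using h def_sub[of M C k X] def_sub[of M C k Y] by simp_all
  then show "w (X \<union> Y) = w X + w Y" using assms(1) h by (intro meas_add) auto
qed

lemma eq_eps: fixes x y :: real assumes "\<And>e. e > 0 \<Longrightarrow> \<bar>x - y\<bar> < e" shows "x = y"
proof (rule ccontr)
  assume "x \<noteq> y"
  then have "\<bar>x - y\<bar> > 0" by simp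
  then show False using assms[of "\<bar>x - y\<bar>"] by simp
qed



lemma approx:
  fixes M :: "('f, 'r, 'u) struc" and lam :: "'u list set \<Rightarrow> real"
  assumes lamk: "keisler M A k lam" and sm: "smooth_local M A k lam"
    and Z: "definable M UNIV k Z" and e: "e > 0"
  shows "\<exists>W1 W2. definable M A k W1 \<and> definable M A k W2 \<and> W1 \<subseteq> Z \<and> Z \<subseteq> W2 \<and> lam W2 - lam W1 < e"
proof -
  define S where "S = {a :: 'u list. length a = k}"
  define D where "D = {X. definable M A k X}"
  have alg: "alg S D" unfolding S_def D_def by (rule def_alg)
  have m: "meas D lam" unfolding D_def using keisler_meas[OF lamk] .
  have ZS: "Z \<subseteq> S" unfolding S_def using def_sub[OF Z] .
  have S1: "lam S = 1" using lamk unfolding keisler_def S_def by blast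
  obtain w1 where w1: "meas (Pow S) w1" "\<forall>P\<in>D. w1 P = lam P" "w1 Z = outer D lam Z"
    using ext_outer[OF alg m ZS] by blast
  obtain w2 where w2: "meas (Pow S) w2" "\<forall>P\<in>D. w2 P = lam P" "w2 (S - Z) = outer D lam (S - Z)"
    using ext_outer[OF alg m, of "S - Z"] by blast
  have SD: "S \<in> D" using alg_S[OF alg] .
  have "w1 S = 1" using w1(2) SD S1 by simp
  then have k1: "keisler M UNIV k w1"
    using w1(1) unfolding S_def by (intro keisler_of_meas)
  have "w2 S = 1" using w2(2) SD S1 by simp
  then have k2: "keisler M UNIV k w2"
    using w2(1) unfolding S_def by (intro keisler_of_meas)
  have a1: "agree M A k w1 lam" using w1(2) unfolding agree_def D_def by blast
  have a2: "agree M A k w2 lam" using w2(2) unfolding agree_def D_def by blast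
  have "agree M UNIV k w1 w2" using sm k1 k2 a1 a2 unfolding smooth_local_def by blast
  then have eq: "w1 Z = w2 Z" using Z unfolding agree_def by blast
  have "w2 S = w2 Z + w2 (S - Z)"
  proof -
    have "S = Z \<union> (S - Z)" using ZS by blast
    then have "w2 S = w2 (Z \<union> (S - Z))" by simp
    also have "\<dots> = w2 Z + w2 (S - Z)" using w2(1) ZS by (intro meas_add) auto
    finally show ?thesis .
  qed
  then have sum1: "outer D lam Z + outer D lam (S - Z) = 1"
    using eq w1(3) w2(2,3) SD S1 by simp
  obtain W2 where W2: "W2 \<in> D" "Z \<subseteq> W2" "lam W2 < outer D lam Z + e / 2"
    using outer_lt[OF alg ZS, of lam "outer D lam Z + e / 2"] e by auto
  obtain W3 where W3: "W3 \<in> D" "S - Z \<subseteq> W3" "lam W3 < outer D lam (S - Z) + e / 2"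
    using outer_lt[OF alg, of "S - Z" lam "outer D lam (S - Z) + e / 2"] e by auto
  define W1 where "W1 = S - W3"
  have W1D: "W1 \<in> D" unfolding W1_def using alg_compl[OF alg W3(1)] .
  have W1Z: "W1 \<subseteq> Z" unfolding W1_def using W3(2) by blast
  have "lam S = lam W1 + lam W3"
  proof -
    have "S = W1 \<union> W3" unfolding W1_def using alg_sub[OF alg W3(1)] by blast
    then have "lam S = lam (W1 \<union> W3)" by simp
    also have "\<dots> = lam W1 + lam W3" using W1D W3(1) m by (intro meas_add) (auto simp: W1_def)
    finally show ?thesis .
  qed
  then have "lam W2 - lam W1 < e" using W2(3) W3(3) sum1 S1 by simp
  then show ?thesis using W1D W2 W1Z unfolding D_def by blast
qed



lemma claim_x:
  fixes M :: "('f, 'r, 'u) struc" and lam w0 mu mu' :: "'u list set \<Rightarrow> real"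
  assumes lamk: "keisler M A (n + m) lam" and sm: "smooth_local M A (n + m) lam"
    and w0k: "keisler M UNIV (n + m) w0" and w0a: "agree M A (n + m) w0 lam"
    and wit1: "agree M A n (pi_x n m lam) mu"
    and mu'k: "keisler M UNIV n mu'" and mu'a: "agree M A n mu' mu"
  shows "agree M UNIV n mu' (pi_x n m w0)"
  unfolding agree_def
proof (intro allI impI)
  fix X assume X: "definable M UNIV n X"
  define cyl where "cyl P = {a @ b | a b. a \<in> P \<and> length a = n \<and> length b = m}" for P :: "'u list set"
  have pw: "pi_x n m w P = w (cyl P)" for w :: "'u list set \<Rightarrow> real" and P
    by (simp add: pi_x_def cyl_def)
  define S where "S = {c :: 'u list. length c = n + m}"
  define Z where "Z = cyl X"
  have dZ: "definable M UNIV (n + m) Z" unfolding Z_def cyl_def using def_cyl_x[OF X] .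
  have XS: "X \<subseteq> {a. length a = n}" using def_sub[OF X] .
  show "mu' X = pi_x n m w0 X"
    unfolding pw Z_def[symmetric]
  proof (rule eq_eps)
    fix e :: real assume e: "e > 0"
    obtain W1 W2 where W: "definable M A (n + m) W1" "definable M A (n + m) W2" "W1 \<subseteq> Z" "Z \<subseteq> W2"
      "lam W2 - lam W1 < e" using approx[OF lamk sm dZ e] by blast
    define P1 where "P1 = {a. length a = n \<and> (\<exists>b. length b = m \<and> a @ b \<in> W1)}"
    define P2 where "P2 = {a. length a = n} - {a. length a = n \<and> (\<exists>b. length b = m \<and> a @ b \<in> S - W2)}"
    have dP1: "definable M A n P1" unfolding P1_def by (rule def_ex_y[OF W(1)])
    have dP2: "definable M A n P2" unfolding P2_def S_def
      by (rule def_compl, rule def_ex_y, rule def_compl[OF W(2)])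
    have W1S: "W1 \<subseteq> S" unfolding S_def using def_sub[OF W(1)] .
    have P1X: "P1 \<subseteq> X"
    proof
      fix a assume "a \<in> P1"
      then obtain b where ab: "length a = n" "length b = m" "a @ b \<in> W1" unfolding P1_def by blast
      then have "a @ b \<in> cyl X" using W(3) unfolding Z_def by blast
      then obtain a' b' where "a @ b = a' @ b'" "a' \<in> X" "length a' = n" unfolding cyl_def by blast
      then show "a \<in> X" using ab(1) by (metis append_eq_append_conv)
    qed
    have XP2: "X \<subseteq> P2"
    proof
      fix a assume a: "a \<in> X"
      then have la: "length a = n" using XS by blast
      have "a @ b \<in> W2" if "length b = m" for b
      proof -
        have "a @ b \<in> cyl X" unfolding cyl_def using a la that by blast
        then show ?thesis using W(4) unfolding Z_def by blast
      qed
      then show "a \<in> P2" unfolding P2_def using la by blast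
    qed
    have W1C: "W1 \<subseteq> cyl P1"
    proof
      fix c assume c: "c \<in> W1"
      then have lc: "length c = n + m" using W1S unfolding S_def by blast
      have "take n c \<in> P1" unfolding P1_def using c lc
        by (intro CollectI conjI exI[of _ "drop n c"]) auto
      moreover have "c = take n c @ drop n c" by simp
      ultimately show "c \<in> cyl P1" unfolding cyl_def using lc
        by (intro CollectI exI[of _ "take n c"] exI[of _ "drop n c"]) auto
    qed
    have C2W: "cyl P2 \<subseteq> W2"
    proof
      fix c assume "c \<in> cyl P2"
      then obtain a b where ab: "c = a @ b" "a \<in> P2" "length a = n" "length b = m" unfolding cyl_def by blast
      have "a @ b \<in> S" unfolding S_def using ab by simp
      then show "c \<in> W2" using ab unfolding P2_def by blast
    qed
    have dC1: "definable M A (n + m) (cyl P1)" unfolding cyl_def by (rule def_cyl_x[OF dP1])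
    have dC2: "definable M A (n + m) (cyl P2)" unfolding cyl_def by (rule def_cyl_x[OF dP2])
    have v1: "mu' P1 = lam (cyl P1)"
      using mu'a wit1 dP1 unfolding agree_def pw by simp
    have v2: "mu' P2 = lam (cyl P2)"
      using mu'a wit1 dP2 unfolding agree_def pw by simp
    have i1: "lam W1 \<le> lam (cyl P1)" using keisler_mono[OF lamk W(1) dC1 W1C] .
    have i2: "lam (cyl P2) \<le> lam W2" using keisler_mono[OF lamk dC2 W(2) C2W] .
    have UP1: "definable M UNIV n P1" using def_mono[OF _ dP1] by blast
    have UP2: "definable M UNIV n P2" using def_mono[OF _ dP2] by blast
    have i3: "mu' P1 \<le> mu' X" using keisler_mono[OF mu'k UP1 X P1X] .
    have i4: "mu' X \<le> mu' P2" using keisler_mono[OF mu'k X UP2 XP2] .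
    have UW1: "definable M UNIV (n + m) W1" using def_mono[OF _ W(1)] by blast
    have UW2: "definable M UNIV (n + m) W2" using def_mono[OF _ W(2)] by blast
    have i5: "w0 W1 \<le> w0 Z" using keisler_mono[OF w0k UW1 dZ W(3)] .
    have i6: "w0 Z \<le> w0 W2" using keisler_mono[OF w0k dZ UW2 W(4)] .
    have v3: "w0 W1 = lam W1" "w0 W2 = lam W2" using w0a W(1,2) unfolding agree_def by auto
    show "\<bar>mu' X - w0 Z\<bar> < e" using i1 i2 i3 i4 i5 i6 v1 v2 v3 W(5) by linarith
  qed
qed

lemma claim_y:
  fixes M :: "('f, 'r, 'u) struc" and lam w0 mu mu' :: "'u list set \<Rightarrow> real"
  assumes lamk: "keisler M A (n + m) lam" and sm: "smooth_local M A (n + m) lam"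
    and w0k: "keisler M UNIV (n + m) w0" and w0a: "agree M A (n + m) w0 lam"
    and wit1: "agree M UNIV m (pi_y n m w0) mu"
    and mu'k: "keisler M UNIV m mu'" and mu'a: "agree M A m mu' mu"
  shows "agree M UNIV m mu' (pi_y n m w0)"
  unfolding agree_def
proof (intro allI impI)
  fix X assume X: "definable M UNIV m X"
  define cyl where "cyl P = {a @ b | a b. b \<in> P \<and> length a = n \<and> length b = m}" for P :: "'u list set"
  have pw: "pi_y n m w P = w (cyl P)" for w :: "'u list set \<Rightarrow> real" and P
    by (simp add: pi_y_def cyl_def)
  define S where "S = {c :: 'u list. length c = n + m}"
  define Z where "Z = cyl X"
  have dZ: "definable M UNIV (n + m) Z" unfolding Z_def cyl_def using def_cyl_y[OF X] .
  have XS: "X \<subseteq> {a. length a = m}" using def_sub[OF X] .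
  show "mu' X = pi_y n m w0 X"
    unfolding pw Z_def[symmetric]
  proof (rule eq_eps)
    fix e :: real assume e: "e > 0"
    obtain W1 W2 where W: "definable M A (n + m) W1" "definable M A (n + m) W2" "W1 \<subseteq> Z" "Z \<subseteq> W2"
      "lam W2 - lam W1 < e" using approx[OF lamk sm dZ e] by blast
    define P1 where "P1 = {b. length b = m \<and> (\<exists>a. length a = n \<and> a @ b \<in> W1)}"
    define P2 where "P2 = {b. length b = m} - {b. length b = m \<and> (\<exists>a. length a = n \<and> a @ b \<in> S - W2)}"
    have dP1: "definable M A m P1" unfolding P1_def by (rule def_ex_x[OF W(1)])
    have dP2: "definable M A m P2" unfolding P2_def S_def
      by (rule def_compl, rule def_ex_x, rule def_compl[OF W(2)])
    have W1S: "W1 \<subseteq> S" unfolding S_def using def_sub[OF W(1)] .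
    have P1X: "P1 \<subseteq> X"
    proof
      fix b assume "b \<in> P1"
      then obtain a where ab: "length a = n" "length b = m" "a @ b \<in> W1" unfolding P1_def by blast
      then have "a @ b \<in> cyl X" using W(3) unfolding Z_def by blast
      then obtain a' b' where "a @ b = a' @ b'" "b' \<in> X" "length a' = n" unfolding cyl_def by blast
      then show "b \<in> X" using ab(1) by (metis append_eq_append_conv)
    qed
    have XP2: "X \<subseteq> P2"
    proof
      fix b assume b: "b \<in> X"
      then have lb: "length b = m" using XS by blast
      have "a @ b \<in> W2" if "length a = n" for a
      proof -
        have "a @ b \<in> cyl X" unfolding cyl_def using b lb that by blast
        then show ?thesis using W(4) unfolding Z_def by blast
      qed
      then show "b \<in> P2" unfolding P2_def using lb by blast
    qed
    have W1C: "W1 \<subseteq> cyl P1"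
    proof
      fix c assume c: "c \<in> W1"
      then have lc: "length c = n + m" using W1S unfolding S_def by blast
      have "drop n c \<in> P1" unfolding P1_def using c lc
        by (intro CollectI conjI exI[of _ "take n c"]) auto
      moreover have "c = take n c @ drop n c" by simp
      ultimately show "c \<in> cyl P1" unfolding cyl_def using lc
        by (intro CollectI exI[of _ "take n c"] exI[of _ "drop n c"]) auto
    qed
    have C2W: "cyl P2 \<subseteq> W2"
    proof
      fix c assume "c \<in> cyl P2"
      then obtain a b where ab: "c = a @ b" "b \<in> P2" "length a = n" "length b = m" unfolding cyl_def by blast
      have "a @ b \<in> S" unfolding S_def using ab by simp
      then show "c \<in> W2" using ab unfolding P2_def by blast
    qed
    have dC1: "definable M A (n + m) (cyl P1)" unfolding cyl_def by (rule def_cyl_y[OF dP1])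
    have dC2: "definable M A (n + m) (cyl P2)" unfolding cyl_def by (rule def_cyl_y[OF dP2])
    have UP1: "definable M UNIV m P1" using def_mono[OF _ dP1] by blast
    have UP2: "definable M UNIV m P2" using def_mono[OF _ dP2] by blast
    have v1: "mu' P1 = lam (cyl P1)"
    proof -
      have "mu' P1 = mu P1" using mu'a dP1 unfolding agree_def by blast
      moreover have "pi_y n m w0 P1 = mu P1" using wit1 UP1 unfolding agree_def by blast
      moreover have "w0 (cyl P1) = lam (cyl P1)" using w0a dC1 unfolding agree_def by blast
      ultimately show ?thesis unfolding pw by simp
    qed
    have v2: "mu' P2 = lam (cyl P2)"
    proof -
      have "mu' P2 = mu P2" using mu'a dP2 unfolding agree_def by blast
      moreover have "pi_y n m w0 P2 = mu P2" using wit1 UP2 unfolding agree_def by blast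
      moreover have "w0 (cyl P2) = lam (cyl P2)" using w0a dC2 unfolding agree_def by blast
      ultimately show ?thesis unfolding pw by simp
    qed
    have i1: "lam W1 \<le> lam (cyl P1)" using keisler_mono[OF lamk W(1) dC1 W1C] .
    have i2: "lam (cyl P2) \<le> lam W2" using keisler_mono[OF lamk dC2 W(2) C2W] .
    have i3: "mu' P1 \<le> mu' X" using keisler_mono[OF mu'k UP1 X P1X] .
    have i4: "mu' X \<le> mu' P2" using keisler_mono[OF mu'k X UP2 XP2] .
    have UW1: "definable M UNIV (n + m) W1" using def_mono[OF _ W(1)] by blast
    have UW2: "definable M UNIV (n + m) W2" using def_mono[OF _ W(2)] by blast
    have i5: "w0 W1 \<le> w0 Z" using keisler_mono[OF w0k UW1 dZ W(3)] .
    have i6: "w0 Z \<le> w0 W2" using keisler_mono[OF w0k dZ UW2 W(4)] .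
    have v3: "w0 W1 = lam W1" "w0 W2 = lam W2" using w0a W(1,2) unfolding agree_def by auto
    show "\<bar>mu' X - w0 Z\<bar> < e" using i1 i2 i3 i4 i5 i6 v1 v2 v3 W(5) by linarith
  qed
qed


theorem proposition4p9:
  fixes M :: "('f, 'r, 'u) struc" and \<kappa> :: "'k rel" and A :: "'u set"
    and n m :: nat and \<mu> \<nu> lam :: "'u list set \<Rightarrow> real"
  assumes "monster M \<kappa>"
    and "small \<kappa> A"
    and "keisler M UNIV n \<mu>"
    and "keisler M UNIV m \<nu>"
    and "keisler M A (n + m) lam"
    and "witnesses M A n m lam \<mu> \<nu>"
    and "smooth_local M A (n + m) lam"
  shows "smooth_global M A n \<mu> \<and> smooth_global M A m \<nu>"
proof -
  obtain w0 where w0: "keisler M UNIV (n + m) w0" "agree M A (n + m) w0 lam"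
    using assms(7) unfolding smooth_local_def by blast
  have wit1: "agree M A n (pi_x n m lam) \<mu>" using assms(6) unfolding witnesses_def by blast
  have cx: "agree M UNIV n mu' (pi_x n m w0)" if "keisler M UNIV n mu'" "agree M A n mu' \<mu>" for mu'
    using claim_x[OF assms(5,7) w0 wit1 that] .
  have "agree M A n \<mu> \<mu>" unfolding agree_def by blast
  then have mux: "agree M UNIV n \<mu> (pi_x n m w0)" using cx assms(3) by blast
  have sg1: "smooth_global M A n \<mu>"
    unfolding smooth_global_def
  proof (intro allI impI)
    fix mu' assume h: "keisler M UNIV n mu' \<and> agree M A n mu' \<mu>"
    then have "agree M UNIV n mu' (pi_x n m w0)" using cx by blast
    then show "agree M UNIV n mu' \<mu>" using mux unfolding agree_def by simp
  qed
  have "agree M UNIV n (pi_x n m w0) \<mu>" using mux unfolding agree_def by simp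
  then have nuy: "agree M UNIV m (pi_y n m w0) \<nu>"
    using assms(6) w0 unfolding witnesses_def by blast
  have sg2: "smooth_global M A m \<nu>"
    unfolding smooth_global_def
  proof (intro allI impI)
    fix nu' assume h: "keisler M UNIV m nu' \<and> agree M A m nu' \<nu>"
    then have "agree M UNIV m nu' (pi_y n m w0)" using claim_y[OF assms(5,7) w0 nuy] by blast
    then show "agree M UNIV m nu' \<nu>" using nuy unfolding agree_def by simp
  qed
  show ?thesis using sg1 sg2 by blast
qed


end
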